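(* Let $G$ be a finite group with identity $e$ and let $H$ be a normal subgroup of $G$. Then the subgroup sum graph $\Gamma_{G,H}$ admits a perfect code if and only if at least one of the following holds: (i) $H=\{e\}$; (ii) $|H|=2$; (iii) for every $x\in G\setminus H$ with $x^2\in H$, the coset $Hx$ contains an involution.
   Context: For a normal subgroup $H$ of a finite group $G$ with identity $e$, the subgroup sum graph $\Gamma_{G,H}$ is the simple undirected graph with vertex set $G$ in which distinct vertices $x,y$ are adjacent if and only if $xy\in H\setminus\{e\}$ (this is symmetric because $H$ is normal). A perfect code in a graph is a set $C$ of vertices that is independent and such that every vertex not in $C$ is adjacent to exactly one vertex of $C$. An involution is an element of order exactly $2$. *)

theory Defs
  imports "HOL-Algebra.Algebra"
begin

definition sum_adj :: "('a, 'b) monoid_scheme \<Rightarrow> 'a set \<Rightarrow> 'a \<Rightarrow> 'a \<Rightarrow> bool" where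
  "sum_adj G H x y \<longleftrightarrow> x \<in> carrier G \<and> y \<in> carrier G \<and> x \<noteq> y \<and>
      x \<otimes>\<^bsub>G\<^esub> y \<in> H - {\<one>\<^bsub>G\<^esub>}"

definition is_perfect_code :: "('a, 'b) monoid_scheme \<Rightarrow> 'a set \<Rightarrow> 'a set \<Rightarrow> bool" where
  "is_perfect_code G H C \<longleftrightarrow> C \<subseteq> carrier G \<and>
      (\<forall>x\<in>C. \<forall>y\<in>C. \<not> sum_adj G H x y) \<and>
      (\<forall>v\<in>carrier G - C. \<exists>!c. c \<in> C \<and> sum_adj G H v c)"

end

theory Submission
  imports Defs
begin

context normal begin

lemma mem_swap: assumes "x \<in> carrier G" "y \<in> carrier G" shows "x \<otimes> y \<in> H \<longleftrightarrow> y \<otimes> x \<in> H"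
  by (metis assms(1,2) inv_op_closed1 inv_solve_left m_closed)

lemma coset_mem: assumes "x \<in> carrier G" "w \<in> carrier G" shows "w \<in> H #> x \<longleftrightarrow> w \<otimes> inv x \<in> H"
  using rcos_module[OF is_group assms(1) assms(2)] .

lemma inv_eq1: assumes "v \<in> carrier G" "c \<in> carrier G" shows "v \<otimes> c = \<one> \<longleftrightarrow> c = inv v"
  by (metis assms(1,2) local.inv_equality r_inv)

lemma ord2: assumes "g \<in> carrier G" shows "ord g = 2 \<longleftrightarrow> g \<noteq> \<one> \<and> g \<otimes> g = \<one>"
proof -
  have sq: "g [^] (2::nat) = g \<otimes> g" using assms by (simp add: numeral_2_eq_2)
  show ?thesis
  proof
    assume "ord g = 2"
    then show "g \<noteq> \<one> \<and> g \<otimes> g = \<one>" using pow_eq_id[OF assms, of 2] sq ord_eq_1[OF assms] by auto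
  next
    assume h: "g \<noteq> \<one> \<and> g \<otimes> g = \<one>"
    then have d: "ord g dvd 2" using pow_eq_id[OF assms, of 2] sq by auto
    have "ord g \<noteq> 1" using h ord_eq_1[OF assms] by auto
    moreover have "ord g \<le> 2" using d by (auto dest: dvd_imp_le)
    moreover have "ord g \<noteq> 0" using d by (metis dvd_0_left_iff zero_neq_numeral)
    ultimately show "ord g = 2" by linarith
  qed
qed

lemma coset_carrier: assumes "x \<in> carrier G" "w \<in> H #> x" shows "w \<in> carrier G"
  using assms r_coset_subset_G subset by blast

lemma K_eq: assumes "x \<in> carrier G" "w \<in> H #> x" shows "H #> w = H #> x"
  using repr_independence[OF assms(2,1) subgroup_axioms] by simp

lemma sq_coset: assumes "x \<in> carrier G" "w \<in> H #> x" shows "w \<otimes> w \<in> H \<longleftrightarrow> x \<otimes> x \<in> H"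
proof -
  obtain h where h: "h \<in> H" "w = h \<otimes> x" using assms(2) unfolding r_coset_def by blast
  have hG: "h \<in> carrier G" using h subset by blast
  have k: "h \<otimes> (x \<otimes> h \<otimes> inv x) \<in> H" using h inv_op_closed2 assms(1) by blast
  have e: "inv x \<otimes> (x \<otimes> x) = x" using assms(1) by (simp add: m_assoc[symmetric])
  have "h \<otimes> (x \<otimes> h \<otimes> inv x) \<otimes> (x \<otimes> x) = h \<otimes> (x \<otimes> (h \<otimes> (inv x \<otimes> (x \<otimes> x))))"
    using hG assms(1) by (simp add: m_assoc)
  also have "\<dots> = h \<otimes> (x \<otimes> (h \<otimes> x))" by (simp only: e)
  also have "\<dots> = w \<otimes> w" using h hG assms(1) by (simp add: m_assoc)
  finally have ww: "h \<otimes> (x \<otimes> h \<otimes> inv x) \<otimes> (x \<otimes> x) = w \<otimes> w" .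
  have kk: "\<And>k y. k \<in> H \<Longrightarrow> y \<in> carrier G \<Longrightarrow> k \<otimes> y \<in> H \<longleftrightarrow> y \<in> H"
  proof -
    fix k y assume kH: "k \<in> H" and yG: "y \<in> carrier G"
    have kG: "k \<in> carrier G" using kH subset by blast
    show "k \<otimes> y \<in> H \<longleftrightarrow> y \<in> H"
    proof
      assume "k \<otimes> y \<in> H"
      then have "inv k \<otimes> (k \<otimes> y) \<in> H" using kH by (simp add: m_inv_closed)
      then show "y \<in> H" using kG yG by (simp add: m_assoc[symmetric])
    next
      assume "y \<in> H" then show "k \<otimes> y \<in> H" using kH by simp
    qed
  qed
  have "h \<otimes> (x \<otimes> h \<otimes> inv x) \<otimes> (x \<otimes> x) \<in> H \<longleftrightarrow> x \<otimes> x \<in> H"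
    by (rule kk[OF k]) (use assms(1) in simp)
  then show ?thesis unfolding ww .
qed

lemma inv_sq: assumes "x \<in> carrier G" shows "inv x \<otimes> inv x \<in> H \<longleftrightarrow> x \<otimes> x \<in> H"
proof -
  have e: "inv x \<otimes> inv x = inv (x \<otimes> x)" using assms by (simp add: inv_mult_group)
  show ?thesis unfolding e
  proof
    assume "inv (x \<otimes> x) \<in> H"
    then have "inv (inv (x \<otimes> x)) \<in> H" by (rule m_inv_closed)
    then show "x \<otimes> x \<in> H" using assms by simp
  qed (rule m_inv_closed)
qed

lemma inv_K: assumes "x \<in> carrier G" "w \<in> H #> x" shows "inv w \<in> H #> inv x"
proof -
  have wG: "w \<in> carrier G" using coset_carrier assms by blast
  have "w \<otimes> inv x \<in> H" using coset_mem assms wG by blast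
  then have "inv (w \<otimes> inv x) \<in> H" by (rule m_inv_closed)
  moreover have "inv (w \<otimes> inv x) = x \<otimes> inv w" using wG assms(1) by (simp add: inv_mult_group)
  ultimately have "x \<otimes> inv w \<in> H" by simp
  then have "inv w \<otimes> x \<in> H" using mem_swap wG assms(1) by blast
  moreover have e: "inv (inv x) = x" using assms(1) by simp
  moreover have "inv w \<in> H #> inv x \<longleftrightarrow> inv w \<otimes> inv (inv x) \<in> H"
    by (rule coset_mem) (use wG assms in auto)
  ultimately show ?thesis by simp
qed

lemma self_K: assumes "x \<in> carrier G" "x \<otimes> x \<in> H" shows "inv x \<in> H #> x"
  using assms coset_mem[of x "inv x"] inv_sq[of x] by simp

lemma disj_K: assumes "v \<in> carrier G" "v \<otimes> v \<notin> H" "w \<in> H #> v" shows "w \<notin> H #> inv v"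
proof
  assume "w \<in> H #> inv v"
  then have "H #> w = H #> inv v" using K_eq assms(1) by blast
  moreover have "H #> w = H #> v" using K_eq assms by blast
  ultimately have "v \<in> H #> inv v" using rcos_self[OF assms(1)] subgroup_axioms by auto
  then show False using coset_mem[of "inv v" v] assms by simp
qed

lemma adj_char: "sum_adj G H v c \<longleftrightarrow> v \<in> carrier G \<and> c \<in> carrier G \<and> c \<in> H #> inv v \<and> c \<noteq> v \<and> c \<noteq> inv v"
proof (cases "v \<in> carrier G \<and> c \<in> carrier G")
  case True
  then have "v \<otimes> c \<in> H \<longleftrightarrow> c \<in> H #> inv v"
    using coset_mem[of "inv v" c] mem_swap[of v c] by simp
  moreover have "v \<otimes> c = \<one> \<longleftrightarrow> c = inv v" using inv_eq1 True by blast
  ultimately show ?thesis unfolding sum_adj_def using True by blast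
next
  case False
  then show ?thesis unfolding sum_adj_def by blast
qed


lemma B_eq: assumes "v \<in> carrier G" "w \<in> (H #> v) \<union> (H #> inv v)"
  shows "(H #> w) \<union> (H #> inv w) = (H #> v) \<union> (H #> inv v)"
  using assms(2)
proof
  assume w: "w \<in> H #> v"
  have "H #> w = H #> v" by (rule K_eq[OF assms(1) w])
  moreover have "H #> inv w = H #> inv v" using K_eq[OF _ inv_K[OF assms(1) w]] assms(1) by simp
  ultimately show ?thesis by simp
next
  assume w: "w \<in> H #> inv v"
  have "H #> w = H #> inv v" using K_eq[OF _ w] assms(1) by simp
  moreover have "inv w \<in> H #> v" using inv_K[OF _ w] assms(1) by simp
  then have "H #> inv w = H #> v" using K_eq assms(1) by blast
  ultimately show ?thesis by blast
qed

lemma card_K: assumes "x \<in> carrier G" shows "card (H #> x) = card H"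
  using card_rcosets_equal[OF rcosetsI[OF subset assms] subset] by simp

lemma finite_K: assumes "finite (carrier G)" "x \<in> carrier G" shows "finite (H #> x)"
  using assms r_coset_subset_G[OF subset assms(2)] finite_subset by blast

lemma xK: assumes "x \<in> carrier G" shows "x \<in> H #> x"
  using rcos_self[OF assms subgroup_axioms] .

lemma noself:
  assumes fin: "finite (carrier G)" and xG: "x \<in> carrier G" and xx: "x \<otimes> x \<in> H"
    and ns: "\<not> (\<exists>u\<in>H #> x. u \<otimes> u = \<one>)"
    and disj: "H = {\<one>} \<or> card H = 2 \<or> (\<forall>x\<in>carrier G - H. x \<otimes> x \<in> H \<longrightarrow> (\<exists>g\<in>H #> x. ord g = 2))"
  shows "H #> x \<subseteq> {x, inv x}"
proof -
  have x1: "x \<in> H #> x" using xK[OF xG] .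
  have x2: "inv x \<in> H #> x" using self_K[OF xG xx] .
  have xne: "x \<noteq> inv x"
  proof
    assume "x = inv x"
    then have "x \<otimes> x = \<one>" using xG inv_eq1 by blast
    then show False using ns x1 by blast
  qed
  have xnH: "x \<notin> H"
  proof
    assume "x \<in> H"
    then have "\<one> \<otimes> inv x \<in> H" using xG by (simp add: m_inv_closed)
    then have "\<one> \<in> H #> x" using coset_mem[of x "\<one>"] xG by simp
    then show False using ns by auto
  qed
  have fK: "finite (H #> x)" using finite_K[OF fin xG] .
  have sub: "{x, inv x} \<subseteq> H #> x" using x1 x2 by blast
  from disj show ?thesis
  proof (elim disjE)
    assume "H = {\<one>}"
    then have "card (H #> x) = 1" using card_K[OF xG] by simp
    then have "card {x, inv x} \<le> 1" using card_mono[OF fK sub] by simp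
    then show ?thesis using xne by simp
  next
    assume "card H = 2"
    then have "card (H #> x) = card {x, inv x}" using card_K[OF xG] xne by simp
    then show ?thesis using card_subset_eq[OF fK sub] by simp
  next
    assume "\<forall>x\<in>carrier G - H. x \<otimes> x \<in> H \<longrightarrow> (\<exists>g\<in>H #> x. ord g = 2)"
    then obtain g where g: "g \<in> H #> x" "ord g = 2" using xG xnH xx by blast
    then have "g \<otimes> g = \<one>" using ord2 coset_carrier[OF xG] by blast
    then show ?thesis using ns g by blast
  qed
qed


lemma suff:
  assumes fin: "finite (carrier G)"
    and disj: "H = {\<one>} \<or> card H = 2 \<or> (\<forall>x\<in>carrier G - H. x \<otimes> x \<in> H \<longrightarrow> (\<exists>g\<in>H #> x. ord g = 2))"
  shows "\<exists>C. is_perfect_code G H C"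
proof -
  define K where "K = (\<lambda>v. H #> v)"
  define a where "a = (\<lambda>v. SOME z. z \<in> K v \<union> K (inv v))"
  define u0 where "u0 = (\<lambda>v. SOME u. u \<in> K v \<and> u \<otimes> u = \<one>)"
  define P where "P = (\<lambda>v. if v \<otimes> v \<in> H then (if (\<exists>u\<in>K v. u \<otimes> u = \<one>) then v = u0 v else True)
                          else (v = a v \<or> v = inv (a v)))"
  define C where "C = {v \<in> carrier G. P v}"
  have vK: "\<And>v. v \<in> carrier G \<Longrightarrow> v \<in> K v" unfolding K_def using xK by blast
  have aB: "\<And>v. v \<in> carrier G \<Longrightarrow> a v \<in> K v \<union> K (inv v)"
    unfolding a_def by (rule someI) (use vK in blast)
  have a_eq: "\<And>v w. v \<in> carrier G \<Longrightarrow> w \<in> K v \<union> K (inv v) \<Longrightarrow> a w = a v"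
    unfolding a_def K_def using B_eq by simp
  have KG: "\<And>v w. v \<in> carrier G \<Longrightarrow> w \<in> K v \<Longrightarrow> w \<in> carrier G"
    unfolding K_def using coset_carrier by blast
  have KE: "\<And>v w. v \<in> carrier G \<Longrightarrow> w \<in> K v \<Longrightarrow> K w = K v"
    unfolding K_def using K_eq by blast
  have u0_eq: "\<And>v w. v \<in> carrier G \<Longrightarrow> w \<in> K v \<Longrightarrow> u0 w = u0 v"
    using KE by (simp add: u0_def)
  have u0P: "\<And>v. (\<exists>u\<in>K v. u \<otimes> u = \<one>) \<Longrightarrow> u0 v \<in> K v \<and> u0 v \<otimes> u0 v = \<one>"
    unfolding u0_def by (rule someI_ex) blast
  have aG: "\<And>v. v \<in> carrier G \<Longrightarrow> a v \<in> carrier G"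
    using aB KG by (metis Un_iff inv_closed)
  have adj: "\<And>v c. sum_adj G H v c \<longleftrightarrow> v \<in> carrier G \<and> c \<in> carrier G \<and> c \<in> K (inv v) \<and> c \<noteq> v \<and> c \<noteq> inv v"
    unfolding K_def using adj_char by blast
  have indep: "\<And>x y. x \<in> C \<Longrightarrow> y \<in> C \<Longrightarrow> \<not> sum_adj G H x y"
  proof
    fix x y assume xC: "x \<in> C" and yC: "y \<in> C" and s: "sum_adj G H x y"
    then have xG: "x \<in> carrier G" and yG: "y \<in> carrier G" and yK: "y \<in> K (inv x)"
      and yx: "y \<noteq> x" and yix: "y \<noteq> inv x" using adj by auto
    have Px: "P x" and Py: "P y" using xC yC C_def by auto
    show False
    proof (cases "x \<otimes> x \<in> H")
      case True
      have "K (inv x) = K x" using KE[OF xG] self_K[OF xG True] K_def by simp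
      then have yK': "y \<in> K x" using yK by simp
      have yy: "y \<otimes> y \<in> H" using sq_coset[OF xG] yK' True K_def by simp
      have Ky: "K y = K x" using KE[OF xG yK'] .
      show False
      proof (cases "\<exists>u\<in>K x. u \<otimes> u = \<one>")
        case True2: True
        then have "x = u0 x" using Px True unfolding P_def by simp
        moreover have "y = u0 y" using Py yy True2 Ky unfolding P_def by simp
        moreover have "u0 y = u0 x" using u0_eq[OF xG yK'] .
        ultimately show False using yx by simp
      next
        case False
        then have "K x \<subseteq> {x, inv x}" using noself[OF fin xG True _ disj] K_def by simp
        then show False using yK' yx yix by blast
      qed
    next
      case False
      have iG: "inv x \<in> carrier G" using xG by simp
      have yy: "y \<otimes> y \<notin> H" using sq_coset[OF iG] yK K_def inv_sq[OF xG] False by simp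
      have Px': "x = a x \<or> x = inv (a x)" using Px False unfolding P_def by simp
      have Py': "y = a y \<or> y = inv (a y)" using Py yy unfolding P_def by simp
      have "a y = a x" using a_eq[OF xG] yK by blast
      then show False using Px' Py' yx yix aG[OF xG] by (metis inv_inv)
    qed
  qed
  have dom: "\<And>v. v \<in> carrier G - C \<Longrightarrow> \<exists>!c. c \<in> C \<and> sum_adj G H v c"
  proof -
    fix v assume v: "v \<in> carrier G - C"
    then have vG: "v \<in> carrier G" and nPv: "\<not> P v" using C_def by auto
    show "\<exists>!c. c \<in> C \<and> sum_adj G H v c"
    proof (cases "v \<otimes> v \<in> H")
      case True
      have Kiv: "K (inv v) = K v" using KE[OF vG] self_K[OF vG True] K_def by simp
      have ex: "\<exists>u\<in>K v. u \<otimes> u = \<one>" using nPv True unfolding P_def by (auto split: if_splits)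
      define c where "c = u0 v"
      have cK: "c \<in> K v" and cc: "c \<otimes> c = \<one>" using u0P[OF ex] c_def by auto
      have cG: "c \<in> carrier G" using KG[OF vG cK] .
      have Kc: "K c = K v" using KE[OF vG cK] .
      have cC: "c \<in> C"
        unfolding C_def P_def using cG cc ex Kc u0_eq[OF vG cK] c_def by simp
      have cv: "c \<noteq> v" using cC v by blast
      have civ: "c \<noteq> inv v"
      proof
        assume "c = inv v"
        moreover have "c = inv c" using cc inv_eq1 cG by blast
        ultimately show False using cv vG by simp
      qed
      show ?thesis
      proof (rule ex1I[of _ c])
        show "c \<in> C \<and> sum_adj G H v c" using cC adj vG cG cK Kiv cv civ by simp
      next
        fix c' assume c': "c' \<in> C \<and> sum_adj G H v c'"
        then have c'K: "c' \<in> K v" and c'G: "c' \<in> carrier G" using adj Kiv by auto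
        have "c' \<otimes> c' \<in> H" using sq_coset[OF vG] c'K True K_def by simp
        moreover have "K c' = K v" using KE[OF vG c'K] .
        moreover have "P c'" using c' C_def by simp
        ultimately have "c' = u0 c'" using ex unfolding P_def by simp
        then show "c' = c" using u0_eq[OF vG c'K] c_def by simp
      qed
    next
      case False
      define \<alpha> where "\<alpha> = a v"
      have \<alpha>B: "\<alpha> \<in> K v \<union> K (inv v)" using aB[OF vG] \<alpha>_def by simp
      have \<alpha>G: "\<alpha> \<in> carrier G" using aG[OF vG] \<alpha>_def by simp
      have vne: "v \<noteq> \<alpha>" "v \<noteq> inv \<alpha>" using nPv False unfolding P_def \<alpha>_def by auto
      have iG: "inv v \<in> carrier G" using vG by simp
      have ivv: "inv v \<otimes> inv v \<notin> H" using inv_sq[OF vG] False by simp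
      have memC: "\<And>c. c \<in> K (inv v) \<Longrightarrow> c \<in> C \<longleftrightarrow> c = \<alpha> \<or> c = inv \<alpha>"
      proof -
        fix c assume cK: "c \<in> K (inv v)"
        have cG: "c \<in> carrier G" using KG[OF iG cK] .
        have "c \<otimes> c \<notin> H" using sq_coset[OF iG] cK K_def ivv by simp
        moreover have "a c = \<alpha>" using a_eq[OF vG] cK \<alpha>_def by blast
        ultimately show "c \<in> C \<longleftrightarrow> c = \<alpha> \<or> c = inv \<alpha>" unfolding C_def P_def using cG by simp
      qed
      have vnK: "v \<notin> K (inv v)" using disj_K[OF vG False] vK[OF vG] K_def by simp
      have adjv: "\<And>c. sum_adj G H v c \<longleftrightarrow> c \<in> K (inv v) \<and> c \<noteq> inv v"
        using adj vG KG[OF iG] vnK by blast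
      from \<alpha>B show ?thesis
      proof
        assume \<alpha>K: "\<alpha> \<in> K v"
        have n1: "\<alpha> \<notin> K (inv v)" using disj_K[OF vG False] \<alpha>K K_def by simp
        have i1: "inv \<alpha> \<in> K (inv v)" using inv_K[OF vG] \<alpha>K K_def by simp
        have i2: "inv \<alpha> \<noteq> inv v" using vne \<alpha>G vG by (metis inv_inv)
        show ?thesis
        proof (rule ex1I[of _ "inv \<alpha>"])
          show "inv \<alpha> \<in> C \<and> sum_adj G H v (inv \<alpha>)" using memC[OF i1] adjv i1 i2 by simp
        next
          fix c' assume c': "c' \<in> C \<and> sum_adj G H v c'"
          then have "c' \<in> K (inv v)" using adjv by simp
          then show "c' = inv \<alpha>" using memC c' n1 by blast
        qed
      next
        assume \<alpha>K: "\<alpha> \<in> K (inv v)"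
        have "inv \<alpha> \<in> K (inv (inv v))" using inv_K[OF iG] \<alpha>K K_def by simp
        then have "inv \<alpha> \<in> K v" using vG by simp
        then have n1: "inv \<alpha> \<notin> K (inv v)" using disj_K[OF vG False] K_def by simp
        have i2: "\<alpha> \<noteq> inv v" using vne \<alpha>G vG by (metis inv_inv)
        show ?thesis
        proof (rule ex1I[of _ "\<alpha>"])
          show "\<alpha> \<in> C \<and> sum_adj G H v \<alpha>" using memC[OF \<alpha>K] adjv \<alpha>K i2 by simp
        next
          fix c' assume c': "c' \<in> C \<and> sum_adj G H v c'"
          then have "c' \<in> K (inv v)" using adjv by simp
          then show "c' = \<alpha>" using memC c' n1 by blast
        qed
      qed
    qed
  qed
  have "is_perfect_code G H C"
    unfolding is_perfect_code_def using indep dom C_def by blast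
  then show ?thesis by blast
qed


lemma nec:
  assumes fin: "finite (carrier G)" and pc: "is_perfect_code G H C"
    and H1: "H \<noteq> {\<one>}" and H2: "card H \<noteq> 2"
    and xG: "x \<in> carrier G" and xnH: "x \<notin> H" and xx: "x \<otimes> x \<in> H"
  shows "\<exists>g\<in>H #> x. ord g = 2"
proof (rule ccontr)
  assume no: "\<not> (\<exists>g\<in>H #> x. ord g = 2)"
  define K where "K = H #> x"
  have CG: "C \<subseteq> carrier G" and indep: "\<And>a b. a \<in> C \<Longrightarrow> b \<in> C \<Longrightarrow> \<not> sum_adj G H a b"
    and dom: "\<And>v. v \<in> carrier G - C \<Longrightarrow> \<exists>!c. c \<in> C \<and> sum_adj G H v c"
    using pc unfolding is_perfect_code_def by auto
  have wG: "\<And>w. w \<in> K \<Longrightarrow> w \<in> carrier G" using coset_carrier[OF xG] K_def by blast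
  have Kw: "\<And>w. w \<in> K \<Longrightarrow> H #> w = K" using K_eq[OF xG] K_def by blast
  have Kiw: "\<And>w. w \<in> K \<Longrightarrow> H #> inv w = K"
  proof -
    fix w assume w: "w \<in> K"
    have "w \<otimes> w \<in> H" using sq_coset[OF xG] w xx K_def by simp
    then have "inv w \<in> H #> w" using self_K wG[OF w] by blast
    then have "H #> inv w = H #> w" using K_eq wG[OF w] by blast
    then show "H #> inv w = K" using Kw[OF w] by simp
  qed
  have iwK: "\<And>w. w \<in> K \<Longrightarrow> inv w \<in> K" using Kiw xK wG by (metis inv_closed)
  have w1: "\<And>w. w \<in> K \<Longrightarrow> w \<noteq> \<one>"
  proof
    fix w assume w: "w \<in> K" and "w = \<one>"
    then have "\<one> \<otimes> inv x \<in> H" using coset_mem[of x "\<one>"] xG K_def by simp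
    then have "inv x \<in> H" using xG by simp
    then have "inv (inv x) \<in> H" by (rule m_inv_closed)
    then show False using xnH xG by simp
  qed
  have wiw: "\<And>w. w \<in> K \<Longrightarrow> w \<noteq> inv w"
  proof
    fix w assume w: "w \<in> K" and e: "w = inv w"
    then have "w \<otimes> w = \<one>" using inv_eq1 wG by blast
    then have "ord w = 2" using ord2 wG[OF w] w1[OF w] by blast
    then show False using no w K_def by blast
  qed
  have adjK: "\<And>w c. w \<in> K \<Longrightarrow> c \<in> K \<Longrightarrow> sum_adj G H w c \<longleftrightarrow> c \<noteq> w \<and> c \<noteq> inv w"
    using adj_char Kiw wG by blast
  have fH: "finite H" using fin subset finite_subset by blast
  have cK3: "card K \<ge> 3"
  proof -
    have oH: "\<one> \<in> H" by (rule subgroup.one_closed[OF subgroup_axioms])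
    have "H \<noteq> {}" using oH by blast
    then have "card H \<noteq> 0" using fH by simp
    moreover have "card H \<noteq> 1"
    proof
      assume "card H = 1"
      then obtain z where "H = {z}" by (rule card_1_singletonE)
      then have "z = \<one>" using oH by blast
      then show False using H1 \<open>H = {z}\<close> by simp
    qed
    ultimately have "card H \<ge> 3" using H2 by linarith
    then show ?thesis using card_K[OF xG] K_def by simp
  qed
  obtain c where cC: "c \<in> C" and cK: "c \<in> K"
  proof (cases "x \<in> C")
    case True then show ?thesis using that xK[OF xG] K_def by blast
  next
    case False
    then obtain c where "c \<in> C" "sum_adj G H x c" using dom xG by blast
    moreover have "x \<in> K" using xK[OF xG] K_def by blast
    ultimately show ?thesis using that adj_char Kiw by blast
  qed
  have cG: "c \<in> carrier G" using wG[OF cK] .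
  have icC: "inv c \<in> C"
  proof (rule ccontr)
    assume "inv c \<notin> C"
    then obtain c' where c': "c' \<in> C" "sum_adj G H (inv c) c'" using dom cG by blast
    have "c' \<in> H #> inv (inv c)" "c' \<noteq> inv c" "c' \<noteq> inv (inv c)" using c'(2) adj_char by auto
    then have "c' \<in> K" "c' \<noteq> c" "c' \<noteq> inv c" using cG Kw[OF cK] by auto
    then have "sum_adj G H c c'" using adjK[OF cK] by simp
    then show False using indep cC c'(1) by blast
  qed
  have nsub: "\<not> K \<subseteq> {c, inv c}"
  proof
    assume sub: "K \<subseteq> {c, inv c}"
    have "finite K" using finite_K[OF fin xG] K_def by simp
    have "card K \<le> card {c, inv c}" by (rule card_mono) (simp, rule sub)
    also have "\<dots> \<le> 2" by (simp add: card_insert_if)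
    finally show False using cK3 by simp
  qed
  then obtain w where wK: "w \<in> K" and wc: "w \<noteq> c" and wic: "w \<noteq> inv c" by blast
  have "sum_adj G H c w" using adjK[OF cK wK] wc wic by simp
  then have wC: "w \<notin> C" using indep cC by blast
  have wGC: "w \<in> carrier G - C" using wC wG[OF wK] by blast
  have a1: "sum_adj G H w c" using adjK[OF wK cK] wc wic cG wG[OF wK] by (metis inv_inv)
  have a2: "sum_adj G H w (inv c)" using adjK[OF wK iwK[OF cK]] wc wic cG wG[OF wK] by (metis inv_inv)
  have "c \<noteq> inv c" using wiw[OF cK] .
  then show False using dom[OF wGC] a1 a2 cC icC by blast
qed

lemma main:
  assumes fin: "finite (carrier G)"
  shows "(\<exists>C. is_perfect_code G H C) \<longleftrightarrow>
           (H = {\<one>} \<or> card H = 2 \<or>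
            (\<forall>x \<in> carrier G - H. x \<otimes> x \<in> H \<longrightarrow> (\<exists>g \<in> H #> x. ord g = 2)))"
proof
  assume "\<exists>C. is_perfect_code G H C"
  then obtain C where C: "is_perfect_code G H C" by blast
  show "H = {\<one>} \<or> card H = 2 \<or> (\<forall>x \<in> carrier G - H. x \<otimes> x \<in> H \<longrightarrow> (\<exists>g \<in> H #> x. ord g = 2))"
    using nec[OF fin C] by blast
next
  assume "H = {\<one>} \<or> card H = 2 \<or> (\<forall>x \<in> carrier G - H. x \<otimes> x \<in> H \<longrightarrow> (\<exists>g \<in> H #> x. ord g = 2))"
  then show "\<exists>C. is_perfect_code G H C" using suff[OF fin] by blast
qed

end

theorem theorem3p1:
  fixes G (structure) and H :: "'a set"
  assumes "group G" and "finite (carrier G)" and "H \<lhd> G"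
  shows "(\<exists>C. is_perfect_code G H C) \<longleftrightarrow>
           (H = {\<one>} \<or> card H = 2 \<or>
            (\<forall>x \<in> carrier G - H. x \<otimes> x \<in> H \<longrightarrow>
               (\<exists>g \<in> H #> x. group.ord G g = 2)))"
  using normal.main[OF assms(3) assms(2)] .

end
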